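(* Let $\mathcal A$ be a $K$-armed bandit algorithm which at each round $t$ draws $A_t$ according to a probability vector $x_t=x_t(\mathcal A)$ determined by the past, i.e. $\mathbb P(A_t=a\mid\mathcal F_{t-1})=x_{t,a}$, and let $\overline x_T=\frac1T\sum_{t=1}^Tx_t$. Suppose there exists $\varepsilon=\varepsilon_T>0$ with $T\varepsilon\to\infty$ and $\min_{a\in[K]}\overline x_{T,a}\ge\varepsilon$. Suppose additionally that there exists a deterministic probability vector $x^\star_T$ with all coordinates positive such that $\overline x_{T,a}/x^\star_{T,a}\to1$ in probability for every arm $a\in[K]$. Then $\mathcal A$ is stable.
   Context: $\mathcal F_{t-1}$ is the sigma-field generated by the history up to round $t-1$. $n_{a,T}=\sum_{t=1}^T\mathbb I\{A_t=a\}$. An algorithm is stable if for every arm $a$ there exist non-random scalars $n^\star_{a,T}$ (possibly depending on the problem parameters and $T$) such that $n_{a,T}/n^\star_{a,T}\to1$ in probability and $n^\star_{a,T}\to\infty$ as $T\to\infty$. *)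

theory Defs
  imports "HOL-Probability.Probability"
begin

definition pulls :: "(nat \<Rightarrow> 'w \<Rightarrow> nat) \<Rightarrow> nat \<Rightarrow> nat \<Rightarrow> 'w \<Rightarrow> nat" where
  "pulls A T a \<omega> = card {t \<in> {1..T}. A t \<omega> = a}"

definition avg_prob :: "(nat \<Rightarrow> nat \<Rightarrow> 'w \<Rightarrow> real) \<Rightarrow> nat \<Rightarrow> nat \<Rightarrow> 'w \<Rightarrow> real" where
  "avg_prob x T a \<omega> = (1 / real T) * (\<Sum>t = 1..T. x t a \<omega>)"

definition conv_in_prob :: "'w measure \<Rightarrow> (nat \<Rightarrow> 'w \<Rightarrow> real) \<Rightarrow> real \<Rightarrow> bool" where
  "conv_in_prob M Y c \<longleftrightarrow>
     (\<forall>\<delta>>0. (\<lambda>T. measure M {\<omega> \<in> space M. \<bar>Y T \<omega> - c\<bar> > \<delta>}) \<longlonglongrightarrow> 0)"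

definition stable :: "'w measure \<Rightarrow> nat \<Rightarrow> (nat \<Rightarrow> 'w \<Rightarrow> nat) \<Rightarrow> bool" where
  "stable M K A \<longleftrightarrow>
     (\<forall>a < K. \<exists>nstar :: nat \<Rightarrow> real.
        conv_in_prob M (\<lambda>T \<omega>. real (pulls A T a \<omega>) / nstar T) 1 \<and>
        filterlim nstar at_top sequentially)"

end

theory Submission
  imports Defs
begin

locale bset =
  fixes M :: "'w measure" and F :: "nat \<Rightarrow> 'w measure" and I p :: "nat \<Rightarrow> 'w \<Rightarrow> real"
  assumes ps: "prob_space M"
  and sub: "\<And>t. subalgebra M (F t)"
  and mono: "\<And>s t. s \<le> t \<Longrightarrow> sets (F s) \<subseteq> sets (F t)"
  and I_meas: "\<And>t. I t \<in> borel_measurable (F t)"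
  and I01: "\<And>t \<omega>. \<omega> \<in> space M \<Longrightarrow> I t \<omega> = 0 \<or> I t \<omega> = 1"
  and p_meas: "\<And>t. t \<ge> 1 \<Longrightarrow> p t \<in> borel_measurable (F (t - 1))"
  and p0: "\<And>t \<omega>. \<omega> \<in> space M \<Longrightarrow> 0 \<le> p t \<omega>"
  and p1: "\<And>t \<omega>. \<omega> \<in> space M \<Longrightarrow> p t \<omega> \<le> 1"
  and cond: "\<And>t. t \<ge> 1 \<Longrightarrow> AE \<omega> in M. real_cond_exp M (F (t - 1)) (I t) \<omega> = p t \<omega>"
begin

lemma sub_mono:
  assumes "s \<le> t" "f \<in> borel_measurable (F s)"
  shows "f \<in> borel_measurable (F t)"
proof -
  have "subalgebra (F t) (F s)"
    using sub[of s] sub[of t] mono[OF assms(1)] unfolding subalgebra_def by auto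
  thus ?thesis using measurable_from_subalg assms(2) by blast
qed

lemma toM: "f \<in> borel_measurable (F s) \<Longrightarrow> f \<in> borel_measurable M"
  using measurable_from_subalg[OF sub] by blast

lemma bnd_int:
  fixes f :: "'w \<Rightarrow> real"
  assumes "f \<in> borel_measurable M" "\<And>\<omega>. \<omega> \<in> space M \<Longrightarrow> \<bar>f \<omega>\<bar> \<le> B"
  shows "integrable M f"
proof -
  interpret prob_space M by (rule ps)
  show ?thesis using assms by (intro integrable_const_bound[where B=B]) auto
qed

lemma orth:
  fixes Z :: "'w \<Rightarrow> real" and B :: real
  assumes t: "t \<ge> 1" and Zm: "Z \<in> borel_measurable (F (t - 1))"
    and Zb: "\<And>\<omega>. \<omega> \<in> space M \<Longrightarrow> \<bar>Z \<omega>\<bar> \<le> B"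
  shows "(\<integral>\<omega>. Z \<omega> * (I t \<omega> - p t \<omega>) \<partial>M) = 0"
proof -
  interpret prob_space M by (rule ps)
  interpret fs: finite_measure_subalgebra M "F (t - 1)"
    by unfold_locales (rule sub)
  have ZM: "Z \<in> borel_measurable M" using toM[OF Zm] .
  have IM: "I t \<in> borel_measurable M" using toM[OF I_meas] .
  have pM: "p t \<in> borel_measurable M" using toM[OF p_meas[OF t]] .
  obtain w0 where "w0 \<in> space M" using not_empty by blast
  hence B0: "0 \<le> B" using Zb[of w0] by (meson abs_ge_zero order.trans)
  have iZI: "integrable M (\<lambda>\<omega>. Z \<omega> * I t \<omega>)"
  proof (rule bnd_int[where B=B])
    show "(\<lambda>\<omega>. Z \<omega> * I t \<omega>) \<in> borel_measurable M" using ZM IM by measurable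
    fix \<omega> assume w: "\<omega> \<in> space M"
    show "\<bar>Z \<omega> * I t \<omega>\<bar> \<le> B" using Zb[OF w] I01[OF w, of t] by auto
  qed
  have iZp: "integrable M (\<lambda>\<omega>. Z \<omega> * p t \<omega>)"
  proof (rule bnd_int[where B=B])
    show "(\<lambda>\<omega>. Z \<omega> * p t \<omega>) \<in> borel_measurable M" using ZM pM by measurable
    fix \<omega> assume w: "\<omega> \<in> space M"
    have "\<bar>Z \<omega> * p t \<omega>\<bar> = \<bar>Z \<omega>\<bar> * p t \<omega>" using p0[OF w, of t] by (simp add: abs_mult)
    also have "\<dots> \<le> B * 1" using Zb[OF w] p0[OF w, of t] p1[OF w, of t] B0
      by (intro mult_mono) auto
    finally show "\<bar>Z \<omega> * p t \<omega>\<bar> \<le> B" by simp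
  qed
  have "(\<integral>\<omega>. Z \<omega> * I t \<omega> \<partial>M) = (\<integral>\<omega>. Z \<omega> * real_cond_exp M (F (t - 1)) (I t) \<omega> \<partial>M)"
    using fs.real_cond_exp_intg(2)[OF iZI Zm IM] by simp
  also have "\<dots> = (\<integral>\<omega>. Z \<omega> * p t \<omega> \<partial>M)"
    by (rule integral_cong_AE) (use ZM IM pM cond[OF t] in auto)
  finally have eq: "(\<integral>\<omega>. Z \<omega> * I t \<omega> \<partial>M) = (\<integral>\<omega>. Z \<omega> * p t \<omega> \<partial>M)" .
  have "(\<integral>\<omega>. Z \<omega> * (I t \<omega> - p t \<omega>) \<partial>M) = (\<integral>\<omega>. Z \<omega> * I t \<omega> - Z \<omega> * p t \<omega> \<partial>M)"
    by (simp add: right_diff_distrib)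
  also have "\<dots> = 0" using eq iZI iZp by simp
  finally show ?thesis .
qed

lemma Y_meas:
  fixes g :: "nat \<Rightarrow> 'w \<Rightarrow> real"
  assumes g_meas: "\<And>t. t \<ge> 1 \<Longrightarrow> g t \<in> borel_measurable (F (t - 1))" and t: "t \<ge> 1"
  shows "(\<lambda>\<omega>. g t \<omega> * (I t \<omega> - p t \<omega>)) \<in> borel_measurable (F t)"
proof -
  have "g t \<in> borel_measurable (F t)" using sub_mono[OF _ g_meas[OF t], of t] by simp
  moreover have "p t \<in> borel_measurable (F t)" using sub_mono[OF _ p_meas[OF t], of t] by simp
  ultimately show ?thesis using I_meas[of t] by measurable
qed

lemma P_meas:
  fixes g :: "nat \<Rightarrow> 'w \<Rightarrow> real"
  assumes g_meas: "\<And>t. t \<ge> 1 \<Longrightarrow> g t \<in> borel_measurable (F (t - 1))"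
  shows "(\<lambda>\<omega>. \<Sum>t=1..n. g t \<omega> * (I t \<omega> - p t \<omega>)) \<in> borel_measurable (F n)"
proof (rule borel_measurable_sum)
  fix t assume "t \<in> {1..n}"
  thus "(\<lambda>\<omega>. g t \<omega> * (I t \<omega> - p t \<omega>)) \<in> borel_measurable (F n)"
    using sub_mono[OF _ Y_meas[OF g_meas]] by auto
qed

lemma Y_bnd:
  fixes g :: "nat \<Rightarrow> 'w \<Rightarrow> real"
  assumes g01: "\<And>t \<omega>. \<omega> \<in> space M \<Longrightarrow> g t \<omega> = 0 \<or> g t \<omega> = 1" and w: "\<omega> \<in> space M"
  shows "\<bar>g t \<omega> * (I t \<omega> - p t \<omega>)\<bar> \<le> 1"
  using g01[OF w, of t] I01[OF w, of t] p0[OF w, of t] p1[OF w, of t] by auto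

lemma P_bnd:
  fixes g :: "nat \<Rightarrow> 'w \<Rightarrow> real"
  assumes g01: "\<And>t \<omega>. \<omega> \<in> space M \<Longrightarrow> g t \<omega> = 0 \<or> g t \<omega> = 1" and w: "\<omega> \<in> space M"
  shows "\<bar>\<Sum>t=1..n. g t \<omega> * (I t \<omega> - p t \<omega>)\<bar> \<le> real n"
proof -
  have "\<bar>\<Sum>t=1..n. g t \<omega> * (I t \<omega> - p t \<omega>)\<bar> \<le> (\<Sum>t=1..n. \<bar>g t \<omega> * (I t \<omega> - p t \<omega>)\<bar>)"
    by (rule sum_abs)
  also have "\<dots> \<le> (\<Sum>t=1..n. 1)" by (intro sum_mono Y_bnd[OF g01 w])
  finally show ?thesis by simp
qed

lemma var_bound:
  fixes g :: "nat \<Rightarrow> 'w \<Rightarrow> real"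
  assumes g_meas: "\<And>t. t \<ge> 1 \<Longrightarrow> g t \<in> borel_measurable (F (t - 1))"
    and g01: "\<And>t \<omega>. \<omega> \<in> space M \<Longrightarrow> g t \<omega> = 0 \<or> g t \<omega> = 1"
  shows "(\<integral>\<omega>. (\<Sum>t=1..n. g t \<omega> * (I t \<omega> - p t \<omega>))^2 \<partial>M) \<le> (\<integral>\<omega>. (\<Sum>t=1..n. g t \<omega> * p t \<omega>) \<partial>M)"
proof (induction n)
  case 0
  then show ?case by simp
next
  case (Suc n)
  define P where "P = (\<lambda>\<omega>. \<Sum>t=1..n. g t \<omega> * (I t \<omega> - p t \<omega>))"
  define G where "G = g (Suc n)"
  define J where "J = I (Suc n)"
  define q where "q = p (Suc n)"
  have Pm: "P \<in> borel_measurable (F n)" unfolding P_def by (rule P_meas[OF g_meas])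
  have Gm: "G \<in> borel_measurable (F n)" unfolding G_def using g_meas[of "Suc n"] by simp
  have qm: "q \<in> borel_measurable (F n)" unfolding q_def using p_meas[of "Suc n"] by simp
  have Jm: "J \<in> borel_measurable M" unfolding J_def using toM[OF I_meas] .
  have PM: "P \<in> borel_measurable M" using toM[OF Pm] .
  have GM: "G \<in> borel_measurable M" using toM[OF Gm] .
  have qM: "q \<in> borel_measurable M" using toM[OF qm] .
  have Pb: "\<And>\<omega>. \<omega> \<in> space M \<Longrightarrow> \<bar>P \<omega>\<bar> \<le> real n" unfolding P_def by (rule P_bnd[OF g01])
  have G01: "\<And>\<omega>. \<omega> \<in> space M \<Longrightarrow> G \<omega> = 0 \<or> G \<omega> = 1" unfolding G_def using g01 by auto
  have J01: "\<And>\<omega>. \<omega> \<in> space M \<Longrightarrow> J \<omega> = 0 \<or> J \<omega> = 1" unfolding J_def using I01 by auto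
  have q01: "\<And>\<omega>. \<omega> \<in> space M \<Longrightarrow> 0 \<le> q \<omega> \<and> q \<omega> \<le> 1" unfolding q_def using p0 p1 by auto
  have o1: "(\<integral>\<omega>. (P \<omega> * G \<omega>) * (J \<omega> - q \<omega>) \<partial>M) = 0"
    unfolding J_def q_def
  proof (rule orth[where B="real n"])
    show "(\<lambda>\<omega>. P \<omega> * G \<omega>) \<in> borel_measurable (F (Suc n - 1))" using Pm Gm by simp
    fix \<omega> assume w: "\<omega> \<in> space M"
    show "\<bar>P \<omega> * G \<omega>\<bar> \<le> real n" using Pb[OF w] G01[OF w] by auto
  qed simp
  have o2: "(\<integral>\<omega>. (G \<omega> * (1 - 2 * q \<omega>)) * (J \<omega> - q \<omega>) \<partial>M) = 0"
    unfolding J_def q_def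
  proof (rule orth[where B=1])
    show "(\<lambda>\<omega>. G \<omega> * (1 - 2 * p (Suc n) \<omega>)) \<in> borel_measurable (F (Suc n - 1))" using qm Gm unfolding q_def by simp
    fix \<omega> assume w: "\<omega> \<in> space M"
    show "\<bar>G \<omega> * (1 - 2 * p (Suc n) \<omega>)\<bar> \<le> 1" using q01[OF w] G01[OF w] unfolding q_def by auto
  qed simp
  have pw: "(\<Sum>t=1..Suc n. g t \<omega> * (I t \<omega> - p t \<omega>))^2 =
     (P \<omega>)^2 + 2 * ((P \<omega> * G \<omega>) * (J \<omega> - q \<omega>)) + (G \<omega> * (1 - 2 * q \<omega>)) * (J \<omega> - q \<omega>)
      + G \<omega> * q \<omega> * (1 - q \<omega>)" if w: "\<omega> \<in> space M" for \<omega>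
  proof -
    have "(\<Sum>t=1..Suc n. g t \<omega> * (I t \<omega> - p t \<omega>)) = P \<omega> + G \<omega> * (J \<omega> - q \<omega>)"
      unfolding P_def G_def J_def q_def by simp
    hence "(\<Sum>t=1..Suc n. g t \<omega> * (I t \<omega> - p t \<omega>))^2 = (P \<omega> + G \<omega> * (J \<omega> - q \<omega>))^2" by simp
    also have "\<dots> = (P \<omega>)^2 + 2 * ((P \<omega> * G \<omega>) * (J \<omega> - q \<omega>)) + (G \<omega> * (1 - 2 * q \<omega>)) * (J \<omega> - q \<omega>)
      + G \<omega> * q \<omega> * (1 - q \<omega>)"
      using G01[OF w] J01[OF w] by (elim disjE) (simp_all add: power2_eq_square algebra_simps)
    finally show ?thesis .
  qed
  have i1: "integrable M (\<lambda>\<omega>. (P \<omega>)^2)"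
  proof (rule bnd_int[where B="real n ^ 2"])
    show "(\<lambda>\<omega>. (P \<omega>)^2) \<in> borel_measurable M" using PM by measurable
    fix \<omega> assume w: "\<omega> \<in> space M"
    have "\<bar>P \<omega>\<bar> \<le> \<bar>real n\<bar>" using Pb[OF w] by simp
    hence "(P \<omega>)^2 \<le> (real n)^2" by (simp only: abs_le_square_iff)
    thus "\<bar>(P \<omega>)^2\<bar> \<le> real n ^ 2" by simp
  qed
  have i2: "integrable M (\<lambda>\<omega>. 2 * ((P \<omega> * G \<omega>) * (J \<omega> - q \<omega>)))"
  proof (rule bnd_int[where B="2 * real n"])
    show "(\<lambda>\<omega>. 2 * ((P \<omega> * G \<omega>) * (J \<omega> - q \<omega>))) \<in> borel_measurable M" using PM GM Jm qM by measurable
    fix \<omega> assume w: "\<omega> \<in> space M"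
    have "\<bar>(P \<omega> * G \<omega>) * (J \<omega> - q \<omega>)\<bar> = \<bar>P \<omega>\<bar> * (\<bar>G \<omega>\<bar> * \<bar>J \<omega> - q \<omega>\<bar>)" by (simp add: abs_mult)
    also have "\<dots> \<le> real n * 1" using Pb[OF w] G01[OF w] J01[OF w] q01[OF w]
      by (intro mult_mono) auto
    finally show "\<bar>2 * ((P \<omega> * G \<omega>) * (J \<omega> - q \<omega>))\<bar> \<le> 2 * real n" by simp
  qed
  have i3: "integrable M (\<lambda>\<omega>. (G \<omega> * (1 - 2 * q \<omega>)) * (J \<omega> - q \<omega>))"
  proof (rule bnd_int[where B=1])
    show "(\<lambda>\<omega>. (G \<omega> * (1 - 2 * q \<omega>)) * (J \<omega> - q \<omega>)) \<in> borel_measurable M" using GM Jm qM by measurable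
    fix \<omega> assume w: "\<omega> \<in> space M"
    show "\<bar>(G \<omega> * (1 - 2 * q \<omega>)) * (J \<omega> - q \<omega>)\<bar> \<le> 1" using G01[OF w] J01[OF w] q01[OF w]
      by (auto simp: abs_mult abs_le_iff) (smt (verit) mult_nonneg_nonneg mult_le_one)+
  qed
  have i4: "integrable M (\<lambda>\<omega>. G \<omega> * q \<omega> * (1 - q \<omega>))"
  proof (rule bnd_int[where B=1])
    show "(\<lambda>\<omega>. G \<omega> * q \<omega> * (1 - q \<omega>)) \<in> borel_measurable M" using GM qM by measurable
    fix \<omega> assume w: "\<omega> \<in> space M"
    show "\<bar>G \<omega> * q \<omega> * (1 - q \<omega>)\<bar> \<le> 1" using G01[OF w] q01[OF w]
      by (auto simp: abs_mult abs_le_iff) (smt (verit) mult_nonneg_nonneg mult_le_one)+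
  qed
  have i5: "integrable M (\<lambda>\<omega>. G \<omega> * q \<omega>)"
  proof (rule bnd_int[where B=1])
    show "(\<lambda>\<omega>. G \<omega> * q \<omega>) \<in> borel_measurable M" using GM qM by measurable
    fix \<omega> assume w: "\<omega> \<in> space M"
    show "\<bar>G \<omega> * q \<omega>\<bar> \<le> 1" using G01[OF w] q01[OF w] by auto
  qed
  have i6: "integrable M (\<lambda>\<omega>. \<Sum>t=1..n. g t \<omega> * p t \<omega>)"
  proof (rule bnd_int[where B="real n"])
    show "(\<lambda>\<omega>. \<Sum>t=1..n. g t \<omega> * p t \<omega>) \<in> borel_measurable M"
    proof (rule borel_measurable_sum)
      fix t assume "t \<in> {1..n}"
      thus "(\<lambda>\<omega>. g t \<omega> * p t \<omega>) \<in> borel_measurable M"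
        using toM[OF g_meas] toM[OF p_meas] by auto
    qed
    fix \<omega> assume w: "\<omega> \<in> space M"
    have "\<bar>\<Sum>t=1..n. g t \<omega> * p t \<omega>\<bar> \<le> (\<Sum>t=1..n. \<bar>g t \<omega> * p t \<omega>\<bar>)" by (rule sum_abs)
    also have "\<dots> \<le> (\<Sum>t=1..n. 1)"
    proof (intro sum_mono)
      fix t show "\<bar>g t \<omega> * p t \<omega>\<bar> \<le> 1" using g01[OF w, of t] p0[OF w, of t] p1[OF w, of t] by auto
    qed
    finally show "\<bar>\<Sum>t=1..n. g t \<omega> * p t \<omega>\<bar> \<le> real n" by simp
  qed
  have "(\<integral>\<omega>. (\<Sum>t=1..Suc n. g t \<omega> * (I t \<omega> - p t \<omega>))^2 \<partial>M) =
     (\<integral>\<omega>. (P \<omega>)^2 + 2 * ((P \<omega> * G \<omega>) * (J \<omega> - q \<omega>)) + (G \<omega> * (1 - 2 * q \<omega>)) * (J \<omega> - q \<omega>)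
      + G \<omega> * q \<omega> * (1 - q \<omega>) \<partial>M)"
    by (intro Bochner_Integration.integral_cong refl pw)
  also have "\<dots> = (\<integral>\<omega>. (P \<omega>)^2 \<partial>M) + (\<integral>\<omega>. 2 * ((P \<omega> * G \<omega>) * (J \<omega> - q \<omega>)) \<partial>M)
      + (\<integral>\<omega>. (G \<omega> * (1 - 2 * q \<omega>)) * (J \<omega> - q \<omega>) \<partial>M) + (\<integral>\<omega>. G \<omega> * q \<omega> * (1 - q \<omega>) \<partial>M)"
    using i1 i2 i3 i4 by simp
  also have "\<dots> = (\<integral>\<omega>. (P \<omega>)^2 \<partial>M) + (\<integral>\<omega>. G \<omega> * q \<omega> * (1 - q \<omega>) \<partial>M)"
    using o1 o2 by simp
  also have "\<dots> \<le> (\<integral>\<omega>. (\<Sum>t=1..n. g t \<omega> * p t \<omega>) \<partial>M) + (\<integral>\<omega>. G \<omega> * q \<omega> \<partial>M)"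
  proof (rule add_mono)
    show "(\<integral>\<omega>. (P \<omega>)^2 \<partial>M) \<le> (\<integral>\<omega>. (\<Sum>t=1..n. g t \<omega> * p t \<omega>) \<partial>M)"
      using Suc.IH unfolding P_def .
    show "(\<integral>\<omega>. G \<omega> * q \<omega> * (1 - q \<omega>) \<partial>M) \<le> (\<integral>\<omega>. G \<omega> * q \<omega> \<partial>M)"
    proof (rule integral_mono[OF i4 i5])
      fix \<omega> assume w: "\<omega> \<in> space M"
      show "G \<omega> * q \<omega> * (1 - q \<omega>) \<le> G \<omega> * q \<omega>" using G01[OF w] q01[OF w]
        by (auto simp: algebra_simps)
    qed
  qed
  also have "\<dots> = (\<integral>\<omega>. (\<Sum>t=1..n. g t \<omega> * p t \<omega>) + G \<omega> * q \<omega> \<partial>M)"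
    using i5 i6 by simp
  also have "\<dots> = (\<integral>\<omega>. (\<Sum>t=1..Suc n. g t \<omega> * p t \<omega>) \<partial>M)"
    unfolding G_def q_def by simp
  finally show ?case .
qed

end

lemma cap_sum:
  fixes q :: "nat \<Rightarrow> real" and c :: real
  assumes q0: "\<And>t. q t \<ge> 0" and c0: "c \<ge> 0"
  shows "(\<Sum>t=1..n. (if (\<Sum>s=1..t. q s) \<le> c then 1 else 0) * q t) \<le> min (\<Sum>s=1..n. q s) c"
proof (induction n)
  case 0 then show ?case using c0 by simp
next
  case (Suc n)
  have m: "(\<Sum>s=1..n. q s) \<le> (\<Sum>s=1..Suc n. q s)" using q0[of "Suc n"] by simp
  show ?case
  proof (cases "(\<Sum>s=1..Suc n. q s) \<le> c")
    case True
    then show ?thesis using Suc.IH by simp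
  next
    case False
    then show ?thesis using Suc.IH m by simp
  qed
qed

lemma card_as_sum:
  "real (card {t \<in> S. P t}) = (\<Sum>t\<in>S. if P t then 1 else 0 :: real)" if "finite S"
  using that by (simp add: sum.If_cases Int_def conj_commute)

theorem lemma2:
  fixes M :: "'w measure" and F :: "nat \<Rightarrow> 'w measure"
    and K :: nat and A :: "nat \<Rightarrow> 'w \<Rightarrow> nat" and x :: "nat \<Rightarrow> nat \<Rightarrow> 'w \<Rightarrow> real"
    and \<epsilon> :: "nat \<Rightarrow> real" and xstar :: "nat \<Rightarrow> nat \<Rightarrow> real"
  assumes "prob_space M"
    and K: "K \<ge> 1"
    and filt_sub: "\<And>t. subalgebra M (F t)"
    and filt_mono: "\<And>s t. s \<le> t \<Longrightarrow> sets (F s) \<subseteq> sets (F t)"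
    and A_meas: "\<And>t. A t \<in> measurable (F t) (count_space UNIV)"
    and A_range: "\<And>t \<omega>. \<omega> \<in> space M \<Longrightarrow> A t \<omega> < K"
    and x_meas: "\<And>t a. t \<ge> 1 \<Longrightarrow> x t a \<in> borel_measurable (F (t - 1))"
    and x_nonneg: "\<And>t a \<omega>. \<omega> \<in> space M \<Longrightarrow> x t a \<omega> \<ge> 0"
    and x_sum: "\<And>t \<omega>. \<omega> \<in> space M \<Longrightarrow> (\<Sum>a<K. x t a \<omega>) = 1"
    and x_cond: "\<And>t a. t \<ge> 1 \<Longrightarrow> a < K \<Longrightarrow>
        AE \<omega> in M. real_cond_exp M (F (t - 1)) (\<lambda>\<omega>. if A t \<omega> = a then 1 else 0) \<omega> = x t a \<omega>"
    and eps_pos: "\<And>T. \<epsilon> T > 0"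
    and eps_lim: "filterlim (\<lambda>T. real T * \<epsilon> T) at_top sequentially"
    and eps_min: "\<And>T. T \<ge> 1 \<Longrightarrow> AE \<omega> in M. \<forall>a<K. avg_prob x T a \<omega> \<ge> \<epsilon> T"
    and xstar_pos: "\<And>T a. a < K \<Longrightarrow> xstar T a > 0"
    and xstar_sum: "\<And>T. (\<Sum>a<K. xstar T a) = 1"
    and xstar_conv: "\<And>a. a < K \<Longrightarrow> conv_in_prob M (\<lambda>T \<omega>. avg_prob x T a \<omega> / xstar T a) 1"
  shows "stable M K A"
  unfolding stable_def
proof (intro allI impI)
  fix a assume aK: "a < K"
  interpret prob_space M by fact
  define I where "I = (\<lambda>t \<omega>. if A t \<omega> = a then 1 else 0 :: real)"
  define p where "p = (\<lambda>t. x t a)"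
  interpret B: bset M F I p
  proof (rule bset.intro)
    show "prob_space M" by fact
    show "subalgebra M (F t)" for t by (rule filt_sub)
    show "sets (F s) \<subseteq> sets (F t)" if "s \<le> t" for s t using filt_mono that .
    show "I t \<in> borel_measurable (F t)" for t
    proof -
      have "(\<lambda>n::nat. if n = a then 1 else 0 :: real) \<in> borel_measurable (count_space UNIV)" by simp
      from measurable_comp[OF A_meas this] show ?thesis unfolding I_def by (simp add: o_def)
    qed
    show "I t \<omega> = 0 \<or> I t \<omega> = 1" for t \<omega> unfolding I_def by simp
    show "p t \<in> borel_measurable (F (t - 1))" if "t \<ge> 1" for t unfolding p_def using x_meas that .
    show "0 \<le> p t \<omega>" if "\<omega> \<in> space M" for t \<omega> unfolding p_def using x_nonneg that .
    show "p t \<omega> \<le> 1" if w: "\<omega> \<in> space M" for t \<omega>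
    proof -
      have "x t a \<omega> \<le> (\<Sum>b<K. x t b \<omega>)"
        by (rule member_le_sum) (use aK x_nonneg[OF w] in auto)
      thus ?thesis unfolding p_def using x_sum[OF w] by simp
    qed
    show "AE \<omega> in M. real_cond_exp M (F (t - 1)) (I t) \<omega> = p t \<omega>" if "t \<ge> 1" for t
      unfolding I_def p_def using x_cond[OF that aK] .
  qed
  have xM: "\<And>t. t \<ge> 1 \<Longrightarrow> x t a \<in> borel_measurable M" using B.toM[OF x_meas] .
  define S where "S = (\<lambda>t \<omega>. \<Sum>s=1..t. x s a \<omega>)"
  have SF: "S t \<in> borel_measurable (F (t - 1))" for t
    unfolding S_def
  proof (rule borel_measurable_sum)
    fix s assume "s \<in> {1..t}"
    thus "x s a \<in> borel_measurable (F (t - 1))" using B.sub_mono[OF _ x_meas[of s]] by auto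
  qed
  have SM: "S t \<in> borel_measurable M" for t using B.toM[OF SF] .
  have avgS: "avg_prob x T a \<omega> = S T \<omega> / real T" for T \<omega>
    unfolding avg_prob_def S_def by simp
  have avgM: "(\<lambda>\<omega>. avg_prob x T a \<omega>) \<in> borel_measurable M" for T
    unfolding avgS using SM[of T] by measurable
  define m where "m = (\<lambda>T. real T * xstar T a)"
  have xs_pos: "xstar T a > 0" for T using xstar_pos[OF aK] .
  have conv: "conv_in_prob M (\<lambda>T \<omega>. avg_prob x T a \<omega> / xstar T a) 1" using xstar_conv[OF aK] .
  have mlim: "filterlim m at_top sequentially"
  proof -
    have "((\<lambda>T. measure M {\<omega> \<in> space M. \<bar>avg_prob x T a \<omega> / xstar T a - 1\<bar> > 1/2}) \<longlongrightarrow> 0) sequentially"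
    proof -
      have h: "\<forall>\<delta>>0. ((\<lambda>T. measure M {\<omega> \<in> space M. \<bar>avg_prob x T a \<omega> / xstar T a - 1\<bar> > \<delta>}) \<longlongrightarrow> 0) sequentially"
        using conv unfolding conv_in_prob_def .
      show ?thesis using h[rule_format, of "1/2"] by simp
    qed
    hence ev1: "eventually (\<lambda>T. measure M {\<omega> \<in> space M. \<bar>avg_prob x T a \<omega> / xstar T a - 1\<bar> > 1/2} < 1) sequentially"
      by (rule order_tendstoD) simp
    have "eventually (\<lambda>T. (2/3) * (real T * \<epsilon> T) \<le> m T) sequentially"
      using ev1 eventually_ge_at_top[of "1::nat"]
    proof eventually_elim
      case (elim T)
      have T1: "T \<ge> 1" using elim(2) .
      have "\<exists>\<omega>\<in>space M. \<epsilon> T \<le> avg_prob x T a \<omega> \<and> \<not> (\<bar>avg_prob x T a \<omega> / xstar T a - 1\<bar> > 1/2)"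
      proof (rule ccontr)
        assume "\<not> ?thesis"
        hence "AE \<omega> in M. \<epsilon> T \<le> avg_prob x T a \<omega> \<longrightarrow> \<bar>avg_prob x T a \<omega> / xstar T a - 1\<bar> > 1/2"
          by auto
        moreover have "AE \<omega> in M. \<epsilon> T \<le> avg_prob x T a \<omega>" using eps_min[OF T1] aK by auto
        ultimately have "AE \<omega> in M. \<bar>avg_prob x T a \<omega> / xstar T a - 1\<bar> > 1/2" by auto
        moreover have "{\<omega> \<in> space M. \<bar>avg_prob x T a \<omega> / xstar T a - 1\<bar> > 1/2} \<in> sets M"
          using avgM[of T] by measurable
        ultimately have "measure M {\<omega> \<in> space M. \<bar>avg_prob x T a \<omega> / xstar T a - 1\<bar> > 1/2} = 1"
          using prob_Collect_eq_1[of "\<lambda>\<omega>. \<bar>avg_prob x T a \<omega> / xstar T a - 1\<bar> > 1/2"] by simp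
        thus False using elim(1) by simp
      qed
      then obtain \<omega> where le: "\<epsilon> T \<le> avg_prob x T a \<omega>" and r: "\<bar>avg_prob x T a \<omega> / xstar T a - 1\<bar> \<le> 1/2"
        by auto
      have "avg_prob x T a \<omega> / xstar T a \<le> 3/2" using r by (simp only: abs_le_iff) linarith
      hence "avg_prob x T a \<omega> \<le> 3/2 * xstar T a" using xs_pos[of T] by (simp add: divide_le_eq)
      hence "(2/3) * \<epsilon> T \<le> xstar T a" using le by simp
      hence "real T * ((2/3) * \<epsilon> T) \<le> real T * xstar T a" by (intro mult_left_mono) auto
      thus ?case unfolding m_def by (simp add: algebra_simps)
    qed
    moreover have "filterlim (\<lambda>T. (2/3) * (real T * \<epsilon> T)) at_top sequentially"
      by (rule filterlim_tendsto_pos_mult_at_top[OF tendsto_const _ eps_lim]) simp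
    ultimately show ?thesis using filterlim_at_top_mono by blast
  qed
  show "\<exists>nstar. conv_in_prob M (\<lambda>T \<omega>. real (pulls A T a \<omega>) / nstar T) 1 \<and> filterlim nstar at_top sequentially"
  proof (intro exI conjI)
    show "filterlim m at_top sequentially" by (rule mlim)
    show "conv_in_prob M (\<lambda>T \<omega>. real (pulls A T a \<omega>) / m T) 1"
      unfolding conv_in_prob_def
    proof (intro allI impI)
      fix \<delta> :: real assume \<delta>: "\<delta> > 0"
      define g where "g = (\<lambda>T t \<omega>. if S t \<omega> \<le> 2 * m T then 1 else 0 :: real)"
      define Q where "Q = (\<lambda>T \<omega>. \<Sum>t=1..T. g T t \<omega> * (I t \<omega> - p t \<omega>))"
      define R where "R = (\<lambda>T \<omega>. avg_prob x T a \<omega> / xstar T a)"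
      define \<eta> where "\<eta> = min (\<delta>/2) 1"
      have \<eta>0: "\<eta> > 0" unfolding \<eta>_def using \<delta> by simp
      define E1 where "E1 = (\<lambda>T. {\<omega> \<in> space M. \<bar>R T \<omega> - 1\<bar> > \<eta>})"
      define E2 where "E2 = (\<lambda>T. {\<omega> \<in> space M. (\<delta> * m T / 2)^2 \<le> (Q T \<omega>)^2})"
      have gF: "g T t \<in> borel_measurable (F (t - 1))" for T t
        unfolding g_def using SF[of t] by measurable
      have g01: "g T t \<omega> = 0 \<or> g T t \<omega> = 1" for T t \<omega> unfolding g_def by simp
      have QM: "Q T \<in> borel_measurable M" for T
        unfolding Q_def using B.toM[OF B.P_meas[of "g T" T]] gF by blast
      have RM: "R T \<in> borel_measurable M" for T unfolding R_def using avgM[of T] by measurable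
      have E1M: "E1 T \<in> sets M" for T unfolding E1_def using RM[of T] by measurable
      have E2M: "E2 T \<in> sets M" for T unfolding E2_def using QM[of T] by measurable
      have Qb: "\<bar>Q T \<omega>\<bar> \<le> real T" if "\<omega> \<in> space M" for T \<omega>
        unfolding Q_def by (rule B.P_bnd[OF _ that]) (rule g01)
      have QI: "integrable M (\<lambda>\<omega>. (Q T \<omega>)^2)" for T
      proof (rule B.bnd_int[where B="real T ^ 2"])
        show "(\<lambda>\<omega>. (Q T \<omega>)^2) \<in> borel_measurable M" using QM[of T] by measurable
        fix \<omega> assume w: "\<omega> \<in> space M"
        have "\<bar>Q T \<omega>\<bar> \<le> \<bar>real T\<bar>" using Qb[OF w] by simp
        hence "(Q T \<omega>)^2 \<le> (real T)^2" by (simp only: abs_le_square_iff)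
        thus "\<bar>(Q T \<omega>)^2\<bar> \<le> real T ^ 2" by simp
      qed
      have m0: "m T > 0" if "T \<ge> 1" for T unfolding m_def using that xs_pos[of T] by simp
      have varQ: "(\<integral>\<omega>. (Q T \<omega>)^2 \<partial>M) \<le> 2 * m T" if T1: "T \<ge> 1" for T
      proof -
        have "(\<integral>\<omega>. (Q T \<omega>)^2 \<partial>M) \<le> (\<integral>\<omega>. (\<Sum>t=1..T. g T t \<omega> * p t \<omega>) \<partial>M)"
          unfolding Q_def by (rule B.var_bound) (use gF g01 in blast)+
        also have "\<dots> \<le> 2 * m T"
        proof (rule integral_le_const)
          show "integrable M (\<lambda>\<omega>. \<Sum>t=1..T. g T t \<omega> * p t \<omega>)"
          proof (rule B.bnd_int[where B="real T"])
            show "(\<lambda>\<omega>. \<Sum>t=1..T. g T t \<omega> * p t \<omega>) \<in> borel_measurable M"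
            proof (rule borel_measurable_sum)
              fix t assume t: "t \<in> {1..T}"
              have "g T t \<in> borel_measurable M" using B.toM[OF gF] .
              moreover have "p t \<in> borel_measurable M" unfolding p_def using xM t by simp
              ultimately show "(\<lambda>\<omega>. g T t \<omega> * p t \<omega>) \<in> borel_measurable M" by measurable
            qed
            fix \<omega> assume w: "\<omega> \<in> space M"
            have "\<bar>\<Sum>t=1..T. g T t \<omega> * p t \<omega>\<bar> \<le> (\<Sum>t=1..T. \<bar>g T t \<omega> * p t \<omega>\<bar>)" by (rule sum_abs)
            also have "\<dots> \<le> (\<Sum>t=1..T. 1)"
            proof (intro sum_mono)
              fix t show "\<bar>g T t \<omega> * p t \<omega>\<bar> \<le> 1"
                using g01[of T t \<omega>] B.p0[OF w, of t] B.p1[OF w, of t] by auto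
            qed
            finally show "\<bar>\<Sum>t=1..T. g T t \<omega> * p t \<omega>\<bar> \<le> real T" by simp
          qed
          show "AE \<omega> in M. (\<Sum>t=1..T. g T t \<omega> * p t \<omega>) \<le> 2 * m T"
          proof (rule AE_I2)
            fix \<omega> assume w: "\<omega> \<in> space M"
            have "(\<Sum>t=1..T. (if (\<Sum>s=1..t. x s a \<omega>) \<le> 2 * m T then 1 else 0) * x t a \<omega>)
                \<le> min (\<Sum>s=1..T. x s a \<omega>) (2 * m T)"
              by (rule cap_sum) (use x_nonneg[OF w] m0[OF T1] in auto)
            thus "(\<Sum>t=1..T. g T t \<omega> * p t \<omega>) \<le> 2 * m T"
              unfolding g_def S_def p_def by simp
          qed
        qed
        finally show ?thesis .
      qed
      have E2b: "measure M (E2 T) \<le> (8 / \<delta>^2) / m T" if T1: "T \<ge> 1" for T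
      proof -
        have pos: "0 < (\<delta> * m T / 2)^2" using m0[OF T1] \<delta> by simp
        have "measure M (E2 T) \<le> (\<integral>\<omega>. (Q T \<omega>)^2 \<partial>M) / (\<delta> * m T / 2)^2"
          unfolding E2_def by (rule integral_Markov_inequality_measure[OF QI _ _ pos]) auto
        also have "\<dots> \<le> (2 * m T) / (\<delta> * m T / 2)^2"
          by (rule divide_right_mono[OF varQ[OF T1]]) simp
        also have "\<dots> = (8 / \<delta>^2) / m T" using m0[OF T1] \<delta> by (simp add: field_simps power2_eq_square)
        finally show ?thesis .
      qed
      have incl: "{\<omega> \<in> space M. \<bar>real (pulls A T a \<omega>) / m T - 1\<bar> > \<delta>} \<subseteq> E1 T \<union> E2 T"
        if T1: "T \<ge> 1" for T
      proof
        fix \<omega> assume "\<omega> \<in> {\<omega> \<in> space M. \<bar>real (pulls A T a \<omega>) / m T - 1\<bar> > \<delta>}"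
        hence w: "\<omega> \<in> space M" and big: "\<bar>real (pulls A T a \<omega>) / m T - 1\<bar> > \<delta>" by auto
        show "\<omega> \<in> E1 T \<union> E2 T"
        proof (cases "\<omega> \<in> E1 T")
          case True thus ?thesis by simp
        next
          case False
          hence r: "\<bar>R T \<omega> - 1\<bar> \<le> \<eta>" unfolding E1_def using w by auto
          have mT: "m T > 0" using m0[OF T1] .
          have RS: "R T \<omega> = S T \<omega> / m T" unfolding R_def avgS m_def by simp
          have "S T \<omega> = R T \<omega> * m T" using RS mT by simp
          also have "\<dots> \<le> 2 * m T" using r mT unfolding \<eta>_def
            by (intro mult_right_mono) (auto simp: abs_le_iff)
          finally have ST: "S T \<omega> \<le> 2 * m T" .
          have g1: "g T t \<omega> = 1" if t: "t \<in> {1..T}" for t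
          proof -
            have "S t \<omega> \<le> S T \<omega>" unfolding S_def
              by (rule sum_mono2) (use t x_nonneg[OF w] in auto)
            thus ?thesis unfolding g_def using ST by simp
          qed
          have N: "real (pulls A T a \<omega>) = (\<Sum>t=1..T. I t \<omega>)"
            unfolding pulls_def I_def by (rule card_as_sum) simp
          have "Q T \<omega> = (\<Sum>t=1..T. I t \<omega> - p t \<omega>)" unfolding Q_def using g1 by simp
          also have "\<dots> = real (pulls A T a \<omega>) - S T \<omega>"
            unfolding N S_def p_def by (simp add: sum_subtractf)
          finally have QN: "Q T \<omega> = real (pulls A T a \<omega>) - S T \<omega>" .
          have "real (pulls A T a \<omega>) / m T - 1 = Q T \<omega> / m T + (R T \<omega> - 1)"
            using QN RS mT by (simp add: field_simps)
          hence "\<delta> < \<bar>Q T \<omega> / m T\<bar> + \<eta>" using big r by linarith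
          moreover have "\<eta> \<le> \<delta> / 2" unfolding \<eta>_def by simp
          moreover have "\<bar>Q T \<omega> / m T\<bar> = \<bar>Q T \<omega>\<bar> / m T" using mT by simp
          ultimately have "\<delta> / 2 < \<bar>Q T \<omega>\<bar> / m T" by linarith
          hence "\<delta> * m T / 2 < \<bar>Q T \<omega>\<bar>" using mT by (simp add: field_simps)
          hence "\<bar>\<delta> * m T / 2\<bar> \<le> \<bar>Q T \<omega>\<bar>" using mT \<delta> by simp
          hence "(\<delta> * m T / 2)^2 \<le> (Q T \<omega>)^2" by (simp only: abs_le_square_iff)
          thus ?thesis unfolding E2_def using w by simp
        qed
      qed
      show "(\<lambda>T. measure M {\<omega> \<in> space M. \<bar>real (pulls A T a \<omega>) / m T - 1\<bar> > \<delta>}) \<longlonglongrightarrow> 0"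
      proof (rule tendsto_sandwich[where f="\<lambda>_. 0" and h="\<lambda>T. measure M (E1 T) + (8 / \<delta>^2) / m T"])
        show "eventually (\<lambda>T. 0 \<le> measure M {\<omega> \<in> space M. \<bar>real (pulls A T a \<omega>) / m T - 1\<bar> > \<delta>}) sequentially"
          by simp
        show "eventually (\<lambda>T. measure M {\<omega> \<in> space M. \<bar>real (pulls A T a \<omega>) / m T - 1\<bar> > \<delta>}
            \<le> measure M (E1 T) + (8 / \<delta>^2) / m T) sequentially"
          using eventually_ge_at_top[of "1::nat"]
        proof eventually_elim
          case (elim T)
          have "measure M {\<omega> \<in> space M. \<bar>real (pulls A T a \<omega>) / m T - 1\<bar> > \<delta>} \<le> measure M (E1 T \<union> E2 T)"
            by (rule finite_measure_mono[OF incl[OF elim]]) (use E1M E2M in auto)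
          also have "\<dots> \<le> measure M (E1 T) + measure M (E2 T)" by (rule measure_Un_le[OF E1M E2M])
          also have "\<dots> \<le> measure M (E1 T) + (8 / \<delta>^2) / m T" using E2b[OF elim] by simp
          finally show ?case .
        qed
        show "((\<lambda>_. 0::real) \<longlongrightarrow> 0) sequentially" by simp
        have h: "\<forall>\<delta>>0. ((\<lambda>T. measure M {\<omega> \<in> space M. \<bar>avg_prob x T a \<omega> / xstar T a - 1\<bar> > \<delta>}) \<longlongrightarrow> 0) sequentially"
          using conv unfolding conv_in_prob_def .
        have t1: "((\<lambda>T. measure M (E1 T)) \<longlongrightarrow> 0) sequentially"
          using h[rule_format, OF \<eta>0] unfolding E1_def R_def by simp
        have t2: "((\<lambda>T. (8 / \<delta>^2) / m T) \<longlongrightarrow> 0) sequentially"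
          by (rule tendsto_divide_0[OF tendsto_const filterlim_at_top_imp_at_infinity[OF mlim]])
        show "((\<lambda>T. measure M (E1 T) + (8 / \<delta>^2) / m T) \<longlongrightarrow> 0) sequentially"
          using tendsto_add[OF t1 t2] by simp
      qed
    qed
  qed
qed

end
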